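(* Let $\ell$ be a prime, $V$ a finite-dimensional $\mathbf{Q}_\ell$-vector space, $k$ an integer with $0<k<\dim(V)$, and $g \in \mathrm{GL}(V)$. Then $\wedge^k(g)$ is unipotent if and only if there exists a $k$-th root of unity $\gamma \in \mathbf{Z}_\ell$ such that $\gamma g$ is unipotent.
   Context: $\wedge^k(g)$ denotes the induced automorphism of the $k$-th exterior power $\wedge^k(V)$. *)

theory Defs
  imports "Jordan_Normal_Form.Determinant" "Jordan_Normal_Form.DL_Submatrix"
          "HOL-Computational_Algebra.Primes"
begin

definition padic_abs_int :: "nat \<Rightarrow> int \<Rightarrow> real" where
  "padic_abs_int l m = (if m = 0 then 0 else inverse (real l ^ multiplicity (int l) m))"

text \<open>nv is an absolute value making the field 'a (of characteristic 0) a copy of Q_l: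
  it is non-archimedean, restricts to the l-adic absolute value on the integers (hence on Q),
  the field is complete for it, and Q is dense.  This characterises Q_l up to a unique
  isometric isomorphism.\<close>
definition is_Ql_absval :: "nat \<Rightarrow> ('a::field_char_0 \<Rightarrow> real) \<Rightarrow> bool" where
  "is_Ql_absval l nv \<longleftrightarrow>
     (\<forall>x. nv x \<ge> 0) \<and> (\<forall>x. nv x = 0 \<longleftrightarrow> x = 0) \<and>
     (\<forall>x y. nv (x * y) = nv x * nv y) \<and>
     (\<forall>x y. nv (x + y) \<le> max (nv x) (nv y)) \<and>
     (\<forall>m::int. nv (of_int m) = padic_abs_int l m) \<and>
     (\<forall>X::nat \<Rightarrow> 'a. (\<forall>e>0. \<exists>N. \<forall>m\<ge>N. \<forall>n\<ge>N. nv (X m - X n) < e) \<longrightarrow>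
          (\<exists>L. \<forall>e>0. \<exists>N. \<forall>n\<ge>N. nv (X n - L) < e)) \<and>
     (\<forall>x. \<forall>e>0. \<exists>q::rat. nv (x - of_rat q) < e)"

definition unipotent_mat :: "'a::comm_ring_1 mat \<Rightarrow> bool" where
  "unipotent_mat A \<longleftrightarrow> (\<exists>N. (A - 1\<^sub>m (dim_row A)) ^\<^sub>m N = 0\<^sub>m (dim_row A) (dim_row A))"

definition ksubsets :: "nat \<Rightarrow> nat \<Rightarrow> nat set set" where
  "ksubsets n k = {I. I \<subseteq> {0..<n} \<and> card I = k}"

text \<open>The k-th exterior power of (the map given by) the n x n matrix A, acting on coordinate
  vectors w.r.t. the basis e_J (J a k-subset of {0..<n}) of the k-th exterior power:
  e_J is sent to the sum over I of minor(I,J) e_I (the k-th compound matrix).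
  Coordinate vectors are functions nat set => 'a vanishing outside the k-subsets.\<close>
definition ext_pow :: "nat \<Rightarrow> 'a::comm_ring_1 mat \<Rightarrow> (nat set \<Rightarrow> 'a) \<Rightarrow> (nat set \<Rightarrow> 'a)" where
  "ext_pow k A c = (\<lambda>I. if I \<in> ksubsets (dim_row A) k
      then (\<Sum>J\<in>ksubsets (dim_row A) k. det (submatrix A I J) * c J) else 0)"

definition ext_space :: "nat \<Rightarrow> nat \<Rightarrow> (nat set \<Rightarrow> 'a::zero) set" where
  "ext_space n k = {c. \<forall>I. I \<notin> ksubsets n k \<longrightarrow> c I = 0}"

definition ext_pow_unipotent :: "nat \<Rightarrow> 'a::comm_ring_1 mat \<Rightarrow> bool" where
  "ext_pow_unipotent k A \<longleftrightarrow>
     (\<exists>N. \<forall>c\<in>ext_space (dim_row A) k. ((\<lambda>d I. ext_pow k A d I - d I) ^^ N) c = (\<lambda>I. 0))"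

end

theory Submission
  imports Defs "Jordan_Normal_Form.Schur_Decomposition" "Jordan_Normal_Form.DL_Rank"
    "HOL-Algebra.Algebraic_Closure_Type"
begin

lemma ksubsets_finite: "finite (ksubsets n k)"
proof -
  have "ksubsets n k \<subseteq> Pow {0..<n}" unfolding ksubsets_def by auto
  thus ?thesis by (rule finite_subset) auto
qed

lemma ksubsetsD:
  assumes "I \<in> ksubsets n k"
  shows "I \<subseteq> {0..<n}" "card I = k" "finite I"
  using assms unfolding ksubsets_def by (auto intro: finite_subset)

lemma lt_in_eq: "I \<subseteq> {0..<n} \<Longrightarrow> {i. i < n \<and> i \<in> I} = I" by auto

lemma pick_bij:
  assumes "finite I" "card I = k"
  shows "bij_betw (pick I) {0..<k} I"
proof -
  have inj: "inj_on (pick I) {0..<k}"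
  proof (rule inj_onI)
    fix a b assume a: "a \<in> {0..<k}" and b: "b \<in> {0..<k}" and e: "pick I a = pick I b"
    show "a = b"
    proof (rule ccontr)
      assume "a \<noteq> b"
      then consider "a < b" | "b < a" by linarith
      thus False
      proof cases
        case 1 thus False using pick_mono[of b I a] b e assms by auto
      next
        case 2 thus False using pick_mono[of a I b] a e assms by auto
      qed
    qed
  qed
  have sub: "pick I ` {0..<k} \<subseteq> I" using pick_in_set assms by auto
  have "card (pick I ` {0..<k}) = card I" using card_image[OF inj] assms by simp
  hence "pick I ` {0..<k} = I" using card_subset_eq[OF assms(1) sub] by simp
  thus ?thesis using inj unfolding bij_betw_def by simp
qed

lemma submatrix_carrier_k:
  assumes "A \<in> carrier_mat n n" "I \<in> ksubsets n k" "J \<in> ksubsets n k"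
  shows "submatrix A I J \<in> carrier_mat k k"
  using assms ksubsetsD[OF assms(2)] ksubsetsD[OF assms(3)]
  unfolding carrier_mat_def by (auto simp: dim_submatrix lt_in_eq)

lemma submatrix_index_k:
  assumes "A \<in> carrier_mat n n" "I \<in> ksubsets n k" "J \<in> ksubsets n k" "a < k" "b < k"
  shows "submatrix A I J $$ (a,b) = A $$ (pick I a, pick J b)"
  using assms ksubsetsD[OF assms(2)] ksubsetsD[OF assms(3)]
  by (intro submatrix_index) (auto simp: lt_in_eq)

lemma cauchy_binet:
  fixes AA BB :: "'a :: comm_ring_1 mat"
  assumes AA: "AA \<in> carrier_mat k n" and BB: "BB \<in> carrier_mat n k"
  shows "det (AA * BB) = (\<Sum>L\<in>ksubsets n k. det (submatrix AA UNIV L) * det (submatrix BB L UNIV))"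
proof -
  let ?U = "{0..<k}"
  let ?F = "{f. (\<forall>i\<in>?U. f i \<in> {0..<n}) \<and> (\<forall>i. i \<notin> ?U \<longrightarrow> f i = i)}"
  let ?FI = "{f \<in> ?F. inj_on f ?U}"
  let ?R = "\<lambda>f. mat\<^sub>r k k (\<lambda>i. row BB (f i))"
  let ?g = "\<lambda>f. det (mat\<^sub>r k k (\<lambda>i. AA $$ (i, f i) \<cdot>\<^sub>v row BB (f i)))"
  let ?KS = "ksubsets n k"
  let ?P = "{p. p permutes ?U}"
  let ?h = "\<lambda>(L, s). (\<lambda>i. if i < k then pick L (s i) else i)"
  let ?inv = "\<lambda>f. (f ` ?U, (\<lambda>i. if i < k then card {a \<in> f ` ?U. a < f i} else i))"
  let ?G = "\<lambda>f. (\<Prod>i\<in>?U. AA $$ (i, f i)) * det (?R f)"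
  let ?H = "\<lambda>L s. (\<Prod>i\<in>?U. AA $$ (i, pick L (s i))) * (signof s * det (submatrix BB L UNIV))"
  have fF: "finite ?F" by (rule finite_bounded_functions) auto
  have rowY: "\<And>j. row BB j \<in> carrier_vec k" using BB by auto
  have key: "?G (?h (L,s)) = ?H L s" if L: "L \<in> ?KS" and s: "s \<in> ?P" for L s
  proof -
    note LD = ksubsetsD[OF L]
    have s': "s permutes ?U" using s by auto
    have sk: "\<And>i. i < k \<Longrightarrow> s i < k" using permutes_in_image[OF s'] by auto
    have YL: "submatrix BB L UNIV \<in> carrier_mat k k"
      using BB LD unfolding carrier_mat_def by (auto simp: dim_submatrix lt_in_eq)
    have "?R (?h (L,s)) = mat k k (\<lambda>(i,j). submatrix BB L UNIV $$ (s i, j))"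
    proof (rule eq_matI)
      fix i j assume "i < dim_row (mat k k (\<lambda>(i,j). submatrix BB L UNIV $$ (s i, j)))"
        "j < dim_col (mat k k (\<lambda>(i,j). submatrix BB L UNIV $$ (s i, j)))"
      hence ij: "i < k" "j < k" by auto
      have "submatrix BB L UNIV $$ (s i, j) = BB $$ (pick L (s i), pick UNIV j)"
        by (rule submatrix_index, insert ij sk[of i] BB LD, auto simp: lt_in_eq)
      thus "?R (?h (L,s)) $$ (i, j) = mat k k (\<lambda>(i,j). submatrix BB L UNIV $$ (s i, j)) $$ (i, j)"
        using ij BB pick_in_set[of "s i" L] sk[of i] LD by (auto simp: pick_UNIV)
    qed auto
    hence "det (?R (?h (L,s))) = signof s * det (submatrix BB L UNIV)"
      using det_permute_rows[OF YL s'] by simp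
    moreover have "(\<Prod>i\<in>?U. AA $$ (i, ?h (L,s) i)) = (\<Prod>i\<in>?U. AA $$ (i, pick L (s i)))"
      by (rule prod.cong, auto)
    ultimately show ?thesis by simp
  qed
  have "det (AA * BB) = sum ?g ?F"
    unfolding mat_mul_finsum_alt[OF AA BB]
    by (rule det_linear_rows_sum, insert AA BB, auto)
  also have "\<dots> = sum ?G ?F"
    by (rule sum.cong[OF refl], rule det_rows_mul, insert rowY, auto)
  also have "\<dots> = sum ?G ?FI"
  proof (rule sum.mono_neutral_right[OF fF])
    show "?FI \<subseteq> ?F" by auto
    show "\<forall>f\<in>?F - ?FI. ?G f = 0"
    proof
      fix f assume "f \<in> ?F - ?FI"
      then obtain i j where ij: "i \<in> ?U" "j \<in> ?U" "i \<noteq> j" "f i = f j"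
        unfolding inj_on_def by auto
      have "det (?R f) = 0"
        by (rule det_identical_rows[of _ k i j], insert ij, auto)
      thus "?G f = 0" by simp
    qed
  qed
  also have "\<dots> = sum (\<lambda>Ls. ?G (?h Ls)) (Sigma ?KS (\<lambda>_. ?P))"
  proof (rule sum.reindex_bij_witness[where i = ?inv and j = ?h, symmetric])
    fix Ls assume Ls: "Ls \<in> Sigma ?KS (\<lambda>_. ?P)"
    obtain L s where Ls_def: "Ls = (L, s)" by (cases Ls)
    have L: "L \<in> ?KS" and s: "s permutes ?U" using Ls Ls_def by auto
    note LD = ksubsetsD[OF L]
    have pb: "bij_betw (pick L) ?U L" by (rule pick_bij[OF LD(3) LD(2)])
    have sU: "s ` ?U = ?U" using permutes_image[OF s] .
    have sk: "\<And>i. i < k \<Longrightarrow> s i < k" using permutes_in_image[OF s] by auto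
    have hLs: "\<And>i. ?h Ls i = (if i < k then pick L (s i) else i)" unfolding Ls_def by simp
    have img: "?h Ls ` ?U = L"
    proof -
      have "?h Ls ` ?U = pick L ` (s ` ?U)" unfolding hLs by (force simp: image_iff)
      also have "\<dots> = L" using sU pb unfolding bij_betw_def by simp
      finally show ?thesis .
    qed
    have sec: "(\<lambda>i. if i < k then card {a \<in> L. a < ?h Ls i} else i) = s"
    proof (rule ext)
      fix i
      show "(if i < k then card {a \<in> L. a < ?h Ls i} else i) = s i"
      proof (cases "i < k")
        case True
        thus ?thesis using card_pick[of "s i" L] sk[of i] LD unfolding hLs by simp
      next
        case False
        thus ?thesis using permutes_not_in[OF s, of i] unfolding hLs by simp
      qed
    qed
    show "?inv (?h Ls) = Ls"
    proof (rule prod_eqI)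
      show "fst (?inv (?h Ls)) = fst Ls" unfolding fst_conv img unfolding Ls_def by simp
      show "snd (?inv (?h Ls)) = snd Ls" unfolding snd_conv img sec unfolding Ls_def by simp
    qed
    show "?h Ls \<in> ?FI"
    proof -
      have "inj_on (?h Ls) ?U"
      proof (rule inj_onI)
        fix a b assume a: "a \<in> ?U" and b: "b \<in> ?U" and e: "?h Ls a = ?h Ls b"
        hence "pick L (s a) = pick L (s b)" unfolding hLs by simp
        hence "s a = s b" using pb sk a b unfolding bij_betw_def inj_on_def by simp
        thus "a = b" using permutes_inj[OF s] unfolding inj_def by blast
      qed
      moreover have "\<forall>i\<in>?U. ?h Ls i \<in> {0..<n}" using img LD(1) by blast
      moreover have "\<forall>i. i \<notin> ?U \<longrightarrow> ?h Ls i = i" unfolding hLs by simp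
      ultimately show ?thesis by simp
    qed
    show "?G (?h Ls) = ?G (?h Ls)" ..
  next
    fix f assume f: "f \<in> ?FI"
    let ?L = "f ` ?U"
    have fin: "\<And>i. i \<in> ?U \<Longrightarrow> f i \<in> {0..<n}" and fout: "\<And>i. i \<notin> ?U \<Longrightarrow> f i = i"
      and finj: "inj_on f ?U" using f by auto
    have Lfin: "finite ?L" by simp
    have cardL: "card ?L = k" using card_image[OF finj] by simp
    have L: "?L \<in> ?KS" unfolding ksubsets_def using fin cardL by blast
    let ?s = "\<lambda>i. if i < k then card {a \<in> ?L. a < f i} else i"
    have sk: "\<And>i. i < k \<Longrightarrow> ?s i < k"
    proof -
      fix i assume i: "i < k"
      have "{a \<in> ?L. a < f i} \<subset> ?L" using i by auto
      from psubset_card_mono[OF Lfin this] cardL i show "?s i < k" by simp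
    qed
    have pick_s: "\<And>i. i < k \<Longrightarrow> pick ?L (?s i) = f i"
    proof -
      fix i assume "i < k"
      hence "f i \<in> ?L" by simp
      from pick_card_in_set[OF this] \<open>i < k\<close> show "pick ?L (?s i) = f i" by simp
    qed
    show "?h (?inv f) = f"
    proof (rule ext)
      fix i show "?h (?inv f) i = f i"
        using pick_s[of i] fout[of i] by simp
    qed
    show "?inv f \<in> Sigma ?KS (\<lambda>_. ?P)"
    proof -
      have "?s permutes ?U"
      proof (rule inj_on_nat_permutes)
        show "inj_on ?s ?U"
        proof (rule inj_onI)
          fix a b assume a: "a \<in> ?U" and b: "b \<in> ?U" and e: "?s a = ?s b"
          have "f a = pick ?L (?s a)" using pick_s[of a] a by simp
          also have "\<dots> = pick ?L (?s b)" using e by simp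
          also have "\<dots> = f b" using pick_s[of b] b by simp
          finally show "a = b" using finj a b unfolding inj_on_def by blast
        qed
        show "?s \<in> ?U \<rightarrow> ?U" using sk by simp
      qed simp_all
      thus ?thesis using L by simp
    qed
  qed
  also have "\<dots> = sum (\<lambda>(L,s). ?H L s) (Sigma ?KS (\<lambda>_. ?P))"
    by (rule sum.cong[OF refl]) (use key in auto)
  also have "\<dots> = (\<Sum>L\<in>?KS. \<Sum>s\<in>?P. ?H L s)"
    by (rule sum.Sigma[symmetric]) (auto simp: ksubsets_finite finite_permutations)
  also have "\<dots> = (\<Sum>L\<in>?KS. det (submatrix AA UNIV L) * det (submatrix BB L UNIV))"
  proof (rule sum.cong[OF refl])
    fix L assume L: "L \<in> ?KS"
    note LD = ksubsetsD[OF L]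
    have XL: "submatrix AA UNIV L \<in> carrier_mat k k"
      using AA LD unfolding carrier_mat_def by (auto simp: dim_submatrix lt_in_eq)
    have "det (submatrix AA UNIV L) = (\<Sum>s\<in>?P. signof s * (\<Prod>i\<in>?U. AA $$ (i, pick L (s i))))"
      unfolding det_def'[OF XL]
    proof (rule sum.cong[OF refl], rule arg_cong[where f = "\<lambda>x. _ * x"], rule prod.cong[OF refl])
      fix s i assume s: "s \<in> ?P" and i: "i \<in> ?U"
      have "s i < k" using permutes_in_image[of s ?U i] s i by auto
      thus "submatrix AA UNIV L $$ (i, s i) = AA $$ (i, pick L (s i))"
        using i AA LD by (subst submatrix_index, auto simp: lt_in_eq pick_UNIV)
    qed
    thus "(\<Sum>s\<in>?P. ?H L s) = det (submatrix AA UNIV L) * det (submatrix BB L UNIV)"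
      by (simp add: sum_distrib_right mult.assoc mult.left_commute)
  qed
  finally show ?thesis .
qed


lemma card_lt_n: "card {i. i < (n::nat) \<and> i \<in> UNIV} = n" by simp

lemma submatrix_mult_k:
  fixes A B :: "'a :: comm_ring_1 mat"
  assumes A: "A \<in> carrier_mat n n" and B: "B \<in> carrier_mat n n"
    and I: "I \<in> ksubsets n k" and J: "J \<in> ksubsets n k"
  shows "submatrix (A * B) I J = submatrix A I UNIV * submatrix B UNIV J"
proof -
  note ID = ksubsetsD[OF I] and JD = ksubsetsD[OF J]
  have d1: "dim_row (submatrix A I UNIV) = k" "dim_col (submatrix A I UNIV) = n"
    using A ID by (auto simp: dim_submatrix lt_in_eq)
  have d2: "dim_row (submatrix B UNIV J) = n" "dim_col (submatrix B UNIV J) = k"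
    using B JD by (auto simp: dim_submatrix lt_in_eq)
  have d3: "dim_row (submatrix (A * B) I J) = k" "dim_col (submatrix (A * B) I J) = k"
    using A B ID JD by (auto simp: dim_submatrix lt_in_eq)
  show ?thesis
  proof (rule eq_matI)
    fix a b assume a: "a < dim_row (submatrix A I UNIV * submatrix B UNIV J)"
      and b: "b < dim_col (submatrix A I UNIV * submatrix B UNIV J)"
    hence ak: "a < k" and bk: "b < k" using d1 d2 by auto
    have pa: "pick I a < n" using pick_in_set[of a I] ID ak by auto
    have pb: "pick J b < n" using pick_in_set[of b J] JD bk by auto
    have "submatrix (A * B) I J $$ (a, b) = (A * B) $$ (pick I a, pick J b)"
      by (rule submatrix_index_k[OF _ I J ak bk], insert A B, auto)
    also have "\<dots> = (\<Sum>l<n. A $$ (pick I a, l) * B $$ (l, pick J b))"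
      using A B pa pb by (auto simp: scalar_prod_def atLeast0LessThan intro!: sum.cong)
    also have "\<dots> = (submatrix A I UNIV * submatrix B UNIV J) $$ (a, b)"
    proof -
      have "(submatrix A I UNIV * submatrix B UNIV J) $$ (a, b) =
        (\<Sum>l<n. submatrix A I UNIV $$ (a, l) * submatrix B UNIV J $$ (l, b))"
        using d1 d2 ak bk by (auto simp: scalar_prod_def atLeast0LessThan intro!: sum.cong)
      also have "\<dots> = (\<Sum>l<n. A $$ (pick I a, l) * B $$ (l, pick J b))"
      proof (rule sum.cong[OF refl])
        fix l assume l: "l \<in> {..<n}"
        have "submatrix A I UNIV $$ (a, l) = A $$ (pick I a, pick UNIV l)"
          by (rule submatrix_index, insert A ID ak l, auto simp: lt_in_eq)
        moreover have "submatrix B UNIV J $$ (l, b) = B $$ (pick UNIV l, pick J b)"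
          by (rule submatrix_index, insert B JD bk l, auto simp: lt_in_eq)
        ultimately show "submatrix A I UNIV $$ (a, l) * submatrix B UNIV J $$ (l, b) =
           A $$ (pick I a, l) * B $$ (l, pick J b)" by (simp add: pick_UNIV)
      qed
      finally show ?thesis by simp
    qed
    finally show "submatrix (A * B) I J $$ (a, b) = (submatrix A I UNIV * submatrix B UNIV J) $$ (a, b)" .
  qed (insert d1 d2 d3, auto)
qed

lemma submatrix_submatrix_row:
  assumes A: "A \<in> carrier_mat n n" and I: "I \<in> ksubsets n k" and L: "L \<in> ksubsets n k"
  shows "submatrix (submatrix A I UNIV) UNIV L = submatrix A I L"
proof -
  note ID = ksubsetsD[OF I] and LD = ksubsetsD[OF L]
  have d1: "dim_row (submatrix A I UNIV) = k" "dim_col (submatrix A I UNIV) = n"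
    using A ID by (auto simp: dim_submatrix lt_in_eq)
  show ?thesis
  proof (rule eq_matI)
    fix a b assume "a < dim_row (submatrix A I L)" "b < dim_col (submatrix A I L)"
    hence ak: "a < k" and bk: "b < k" using A ID LD by (auto simp: dim_submatrix lt_in_eq)
    have pb: "pick L b < n" using pick_in_set[of b L] LD bk by auto
    have "submatrix (submatrix A I UNIV) UNIV L $$ (a, b) = submatrix A I UNIV $$ (pick UNIV a, pick L b)"
      by (rule submatrix_index, insert d1 ak bk LD, auto simp: lt_in_eq)
    also have "\<dots> = A $$ (pick I a, pick UNIV (pick L b))"
      by (subst submatrix_index, insert A ID ak pb, auto simp: lt_in_eq pick_UNIV)
    also have "\<dots> = submatrix A I L $$ (a, b)"
      by (subst submatrix_index_k[OF A I L ak bk], simp add: pick_UNIV)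
    finally show "submatrix (submatrix A I UNIV) UNIV L $$ (a, b) = submatrix A I L $$ (a, b)" .
  qed (insert A ID LD d1, auto simp: dim_submatrix lt_in_eq)
qed

lemma submatrix_submatrix_col:
  assumes B: "B \<in> carrier_mat n n" and J: "J \<in> ksubsets n k" and L: "L \<in> ksubsets n k"
  shows "submatrix (submatrix B UNIV J) L UNIV = submatrix B L J"
proof -
  note JD = ksubsetsD[OF J] and LD = ksubsetsD[OF L]
  have d1: "dim_row (submatrix B UNIV J) = n" "dim_col (submatrix B UNIV J) = k"
    using B JD by (auto simp: dim_submatrix lt_in_eq)
  show ?thesis
  proof (rule eq_matI)
    fix a b assume "a < dim_row (submatrix B L J)" "b < dim_col (submatrix B L J)"
    hence ak: "a < k" and bk: "b < k" using B JD LD by (auto simp: dim_submatrix lt_in_eq)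
    have pa: "pick L a < n" using pick_in_set[of a L] LD ak by auto
    have "submatrix (submatrix B UNIV J) L UNIV $$ (a, b) = submatrix B UNIV J $$ (pick L a, pick UNIV b)"
      by (rule submatrix_index, insert d1 ak bk LD, auto simp: lt_in_eq)
    also have "\<dots> = B $$ (pick UNIV (pick L a), pick J b)"
      by (subst submatrix_index, insert B JD bk pa, auto simp: lt_in_eq pick_UNIV)
    also have "\<dots> = submatrix B L J $$ (a, b)"
      by (subst submatrix_index_k[OF B L J ak bk], simp add: pick_UNIV)
    finally show "submatrix (submatrix B UNIV J) L UNIV $$ (a, b) = submatrix B L J $$ (a, b)" .
  qed (insert B JD LD d1, auto simp: dim_submatrix lt_in_eq)
qed

lemma cauchy_binet_k:
  fixes A B :: "'a :: comm_ring_1 mat"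
  assumes A: "A \<in> carrier_mat n n" and B: "B \<in> carrier_mat n n"
    and I: "I \<in> ksubsets n k" and J: "J \<in> ksubsets n k"
  shows "det (submatrix (A * B) I J) = (\<Sum>L\<in>ksubsets n k. det (submatrix A I L) * det (submatrix B L J))"
proof -
  note ID = ksubsetsD[OF I] and JD = ksubsetsD[OF J]
  have c1: "submatrix A I UNIV \<in> carrier_mat k n"
    by (rule carrier_matI) (use A ID in \<open>auto simp: dim_submatrix lt_in_eq\<close>)
  have c2: "submatrix B UNIV J \<in> carrier_mat n k"
    by (rule carrier_matI) (use B JD in \<open>auto simp: dim_submatrix lt_in_eq\<close>)
  show ?thesis
    unfolding submatrix_mult_k[OF A B I J] cauchy_binet[OF c1 c2]
  proof (rule sum.cong[OF refl])
    fix L assume L: "L \<in> ksubsets n k"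
    show "det (submatrix (submatrix A I UNIV) UNIV L) * det (submatrix (submatrix B UNIV J) L UNIV) =
      det (submatrix A I L) * det (submatrix B L J)"
      unfolding submatrix_submatrix_row[OF A I L] submatrix_submatrix_col[OF B J L] ..
  qed
qed


definition dop :: "nat \<Rightarrow> 'a::comm_ring_1 mat \<Rightarrow> (nat set \<Rightarrow> 'a) \<Rightarrow> (nat set \<Rightarrow> 'a)" where
  "dop k A = (\<lambda>d I. ext_pow k A d I - d I)"

lemma unip_iff: "ext_pow_unipotent k A \<longleftrightarrow> (\<exists>N. \<forall>c\<in>ext_space (dim_row A) k. (dop k A ^^ N) c = (\<lambda>I. 0))"
  unfolding ext_pow_unipotent_def dop_def ..

lemma ext_pow_space: "ext_pow k A c \<in> ext_space (dim_row A) k"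
  unfolding ext_pow_def ext_space_def by auto

lemma dop_space: "c \<in> ext_space (dim_row A) k \<Longrightarrow> dop k A c \<in> ext_space (dim_row A) k"
  unfolding dop_def ext_pow_def ext_space_def by auto

lemma dop_pow_space: "c \<in> ext_space (dim_row A) k \<Longrightarrow> (dop k A ^^ N) c \<in> ext_space (dim_row A) k"
  by (induction N) (auto intro: dop_space)

lemma ext_pow_mult:
  fixes A B :: "'a :: comm_ring_1 mat"
  assumes A: "A \<in> carrier_mat n n" and B: "B \<in> carrier_mat n n"
  shows "ext_pow k (A * B) c = ext_pow k A (ext_pow k B c)"
proof (rule ext)
  fix I
  have dAB: "dim_row (A * B) = n" and dA: "dim_row A = n" and dB: "dim_row B = n" using A B by auto
  show "ext_pow k (A * B) c I = ext_pow k A (ext_pow k B c) I"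
  proof (cases "I \<in> ksubsets n k")
    case True
    have "ext_pow k (A * B) c I = (\<Sum>J\<in>ksubsets n k. det (submatrix (A * B) I J) * c J)"
      unfolding ext_pow_def dAB using True by simp
    also have "\<dots> = (\<Sum>J\<in>ksubsets n k. (\<Sum>L\<in>ksubsets n k. det (submatrix A I L) * det (submatrix B L J)) * c J)"
      by (rule sum.cong[OF refl], subst cauchy_binet_k[OF A B True], auto)
    also have "\<dots> = (\<Sum>J\<in>ksubsets n k. \<Sum>L\<in>ksubsets n k. det (submatrix A I L) * (det (submatrix B L J) * c J))"
      by (simp add: sum_distrib_right mult.assoc)
    also have "\<dots> = (\<Sum>L\<in>ksubsets n k. \<Sum>J\<in>ksubsets n k. det (submatrix A I L) * (det (submatrix B L J) * c J))"
      by (rule sum.swap)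
    also have "\<dots> = (\<Sum>L\<in>ksubsets n k. det (submatrix A I L) * ext_pow k B c L)"
    proof (rule sum.cong[OF refl])
      fix L assume L: "L \<in> ksubsets n k"
      show "(\<Sum>J\<in>ksubsets n k. det (submatrix A I L) * (det (submatrix B L J) * c J)) =
         det (submatrix A I L) * ext_pow k B c L"
        unfolding ext_pow_def dB using L by (simp add: sum_distrib_left)
    qed
    also have "\<dots> = ext_pow k A (ext_pow k B c) I"
      unfolding ext_pow_def dA using True by simp
    finally show ?thesis .
  next
    case False
    thus ?thesis unfolding ext_pow_def dAB dA by simp
  qed
qed

lemma not_subset_card:
  assumes "finite J" "card I = card J" "I \<noteq> J" "finite I"
  shows "\<exists>i\<in>I. i \<notin> J"
proof (rule ccontr)
  assume "\<not> ?thesis"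
  hence "I \<subseteq> J" by auto
  from card_subset_eq[OF assms(1) this] assms show False by simp
qed

lemma det_sub_one:
  assumes I: "I \<in> ksubsets n k" and J: "J \<in> ksubsets n k"
  shows "det (submatrix (1\<^sub>m n :: 'a :: comm_ring_1 mat) I J) = (if I = J then 1 else 0)"
proof -
  note ID = ksubsetsD[OF I] and JD = ksubsetsD[OF J]
  have one: "1\<^sub>m n \<in> carrier_mat n n" by simp
  let ?M = "submatrix (1\<^sub>m n :: 'a mat) I J"
  have M: "?M \<in> carrier_mat k k" by (rule submatrix_carrier_k[OF one I J])
  have idx: "\<And>a b. a < k \<Longrightarrow> b < k \<Longrightarrow> ?M $$ (a, b) = (if pick I a = pick J b then 1 else 0)"
  proof -
    fix a b assume a: "a < k" and b: "b < k"
    have "pick I a < n" "pick J b < n" using pick_in_set[of a I] pick_in_set[of b J] ID JD a b by auto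
    thus "?M $$ (a, b) = (if pick I a = pick J b then 1 else 0)"
      unfolding submatrix_index_k[OF one I J a b] by simp
  qed
  show ?thesis
  proof (cases "I = J")
    case True
    have pb: "inj_on (pick I) {0..<k}" using pick_bij[OF ID(3) ID(2)] unfolding bij_betw_def by simp
    have "?M = 1\<^sub>m k"
    proof (rule eq_matI)
      fix a b assume "a < dim_row (1\<^sub>m k :: 'a mat)" "b < dim_col (1\<^sub>m k :: 'a mat)"
      hence a: "a < k" and b: "b < k" by auto
      have "(pick I a = pick I b) = (a = b)" using pb a b unfolding inj_on_def by auto
      thus "?M $$ (a, b) = 1\<^sub>m k $$ (a, b)" using idx[OF a b] a b True by simp
    qed (insert M, auto)
    thus ?thesis using True by simp
  next
    case False
    obtain i where i: "i \<in> I" "i \<notin> J" using not_subset_card[OF JD(3) _ False ID(3)] ID JD by auto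
    define a where "a = card {x \<in> I. x < i}"
    have pa: "pick I a = i" unfolding a_def by (rule pick_card_in_set[OF i(1)])
    have ak: "a < k"
    proof -
      have "{x \<in> I. x < i} \<subset> I" using i by auto
      from psubset_card_mono[OF ID(3) this] ID show ?thesis unfolding a_def by simp
    qed
    have "?M = mat\<^sub>r k k (\<lambda>r. if r = a then 0\<^sub>v k else row ?M r)"
    proof (rule eq_matI)
      fix r b assume "r < dim_row (mat\<^sub>r k k (\<lambda>r. if r = a then 0\<^sub>v k else row ?M r))"
        "b < dim_col (mat\<^sub>r k k (\<lambda>r. if r = a then 0\<^sub>v k else row ?M r))"
      hence r: "r < k" and b: "b < k" by auto
      have "pick J b \<in> J" using pick_in_set[of b J] JD b by auto
      hence "r = a \<Longrightarrow> ?M $$ (r, b) = 0" using idx[OF r b] pa i by auto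
      thus "?M $$ (r, b) = mat\<^sub>r k k (\<lambda>r. if r = a then 0\<^sub>v k else row ?M r) $$ (r, b)"
        using r b M by auto
    qed (insert M, auto)
    also have "det \<dots> = 0" by (rule det_row_0[OF ak], insert M, auto)
    finally show ?thesis using False by simp
  qed
qed

lemma ext_pow_one:
  assumes c: "c \<in> ext_space n k"
  shows "ext_pow k (1\<^sub>m n :: 'a :: comm_ring_1 mat) c = c"
proof (rule ext)
  fix I
  show "ext_pow k (1\<^sub>m n :: 'a mat) c I = c I"
  proof (cases "I \<in> ksubsets n k")
    case True
    have "ext_pow k (1\<^sub>m n :: 'a mat) c I = (\<Sum>J\<in>ksubsets n k. (if I = J then 1 else 0) * c J)"
      unfolding ext_pow_def using True by (simp add: det_sub_one)
    also have "\<dots> = (\<Sum>J\<in>ksubsets n k. if I = J then c J else 0)"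
      by (rule sum.cong) auto
    also have "\<dots> = c I" using True ksubsets_finite[of n k] by simp
    finally show ?thesis .
  next
    case False
    thus ?thesis using c unfolding ext_pow_def ext_space_def by simp
  qed
qed

lemma ext_pow_diff: "ext_pow k A (\<lambda>I. x I - y I) = (\<lambda>I. ext_pow k A x I - ext_pow k A y I)"
  unfolding ext_pow_def by (auto simp: algebra_simps sum_subtractf)

lemma ext_pow_zero: "ext_pow k A (\<lambda>I. 0) = (\<lambda>I. 0)"
  unfolding ext_pow_def by auto

lemma ext_pow_smult:
  fixes A :: "'a :: comm_ring_1 mat"
  assumes A: "A \<in> carrier_mat n n" and g: "g ^ k = 1"
  shows "ext_pow k (g \<cdot>\<^sub>m A) c = ext_pow k A c"
proof -
  have d: "dim_row (g \<cdot>\<^sub>m A) = n" "dim_row A = n" using A by auto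
  have "det (submatrix (g \<cdot>\<^sub>m A) I J) = det (submatrix A I J)"
    if I: "I \<in> ksubsets n k" and J: "J \<in> ksubsets n k" for I J
  proof -
    have M: "submatrix A I J \<in> carrier_mat k k" by (rule submatrix_carrier_k[OF A I J])
    have gA: "g \<cdot>\<^sub>m A \<in> carrier_mat n n" using A by simp
    have "submatrix (g \<cdot>\<^sub>m A) I J = g \<cdot>\<^sub>m submatrix A I J"
    proof (rule eq_matI)
      fix a b assume "a < dim_row (g \<cdot>\<^sub>m submatrix A I J)" "b < dim_col (g \<cdot>\<^sub>m submatrix A I J)"
      hence a: "a < k" and b: "b < k" using M by auto
      have "pick I a < n" "pick J b < n" using pick_in_set[of a I] pick_in_set[of b J]
          ksubsetsD[OF I] ksubsetsD[OF J] a b by auto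
      thus "submatrix (g \<cdot>\<^sub>m A) I J $$ (a, b) = (g \<cdot>\<^sub>m submatrix A I J) $$ (a, b)"
        unfolding submatrix_index_k[OF gA I J a b] using M a b A
        by (simp add: submatrix_index_k[OF A I J a b])
    qed (insert M submatrix_carrier_k[OF gA I J], auto)
    thus ?thesis using M g by simp
  qed
  thus ?thesis unfolding ext_pow_def d by auto
qed

lemma dop_conj:
  fixes A :: "'a :: comm_ring_1 mat"
  assumes sim: "similar_mat_wit A T P Q" and A: "A \<in> carrier_mat n n" and c: "c \<in> ext_space n k"
  shows "(dop k A ^^ N) c = ext_pow k P ((dop k T ^^ N) (ext_pow k Q c))"
proof -
  note S = similar_mat_witD2[OF A sim]
  have dT: "dim_row T = n" and dQ: "dim_row Q = n" using S by auto
  have backQ: "ext_pow k Q (ext_pow k P y) = y" if yy: "y \<in> ext_space n k" for y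
  proof -
    have "ext_pow k Q (ext_pow k P y) = ext_pow k (Q * P) y"
      by (rule ext_pow_mult[symmetric], insert S, auto)
    also have "\<dots> = y" using S(2) ext_pow_one[OF yy] by simp
    finally show ?thesis .
  qed
  show ?thesis
  proof (induction N)
    case 0
    have "ext_pow k P (ext_pow k Q c) = ext_pow k (P * Q) c"
      by (rule ext_pow_mult[symmetric], insert S, auto)
    also have "\<dots> = c" using S(1) ext_pow_one[OF c] by simp
    finally show ?case by simp
  next
    case (Suc N)
    define y where "y = (dop k T ^^ N) (ext_pow k Q c)"
    have y: "y \<in> ext_space n k" unfolding y_def using dop_pow_space[of "ext_pow k Q c" T k N]
      ext_pow_space[of k Q c] dT dQ by simp
    have "(dop k A ^^ Suc N) c = dop k A (ext_pow k P y)" using Suc unfolding y_def by simp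
    moreover have "ext_pow k A (ext_pow k P y) = ext_pow k P (ext_pow k T y)"
    proof -
      have "ext_pow k A (ext_pow k P y) = ext_pow k (P * T) (ext_pow k Q (ext_pow k P y))"
        unfolding S(3) by (rule ext_pow_mult, insert S, auto)
      also have "\<dots> = ext_pow k (P * T) y" using backQ[OF y] by simp
      also have "\<dots> = ext_pow k P (ext_pow k T y)" by (rule ext_pow_mult, insert S, auto)
      finally show ?thesis .
    qed
    hence "dop k A (ext_pow k P y) = ext_pow k P (dop k T y)"
      unfolding dop_def ext_pow_diff by simp
    ultimately show ?case unfolding y_def by simp
  qed
qed

lemma nilp_transfer:
  fixes A :: "'a :: comm_ring_1 mat"
  assumes sim: "similar_mat_wit A T P Q" and A: "A \<in> carrier_mat n n"
    and nil: "\<forall>c\<in>ext_space n k. (dop k T ^^ N) c = (\<lambda>I. 0)"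
  shows "\<forall>c\<in>ext_space n k. (dop k A ^^ N) c = (\<lambda>I. 0)"
proof
  fix c :: "nat set \<Rightarrow> 'a" assume c: "c \<in> ext_space n k"
  note S = similar_mat_witD2[OF A sim]
  have "ext_pow k Q c \<in> ext_space n k" using ext_pow_space[of k Q c] S by simp
  thus "(dop k A ^^ N) c = (\<lambda>I. 0)"
    unfolding dop_conj[OF sim A c] using nil ext_pow_zero by simp
qed


definition tri_prop :: "nat \<Rightarrow> nat \<Rightarrow> 'a :: comm_ring_1 mat \<Rightarrow> bool" where
  "tri_prop n k T \<longleftrightarrow> (\<forall>I\<in>ksubsets n k. \<forall>J\<in>ksubsets n k.
     det (submatrix T I J) \<noteq> 0 \<longrightarrow> I = J \<or> \<Sum>I < \<Sum>J)"

lemma ksubsets_sum_le: "I \<in> ksubsets n k \<Longrightarrow> \<Sum>I \<le> \<Sum>{0..<n}"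
  using ksubsetsD[of I n k] by (intro sum_mono2) auto

lemma tri_nilp:
  fixes T :: "'a :: comm_ring_1 mat"
  assumes T: "T \<in> carrier_mat n n" and tri: "tri_prop n k T"
    and diag: "\<forall>I\<in>ksubsets n k. det (submatrix T I I) = 1"
  shows "\<forall>c\<in>ext_space n k. (dop k T ^^ Suc (\<Sum>{0..<n})) c = (\<lambda>I. 0)"
proof -
  let ?W = "\<Sum>{0..<n}"
  let ?KS = "ksubsets n k"
  have dT: "dim_row T = n" using T by auto
  have claim: "\<forall>c\<in>ext_space n k. \<forall>I. ?W < \<Sum>I + m \<longrightarrow> (dop k T ^^ m) c I = 0" for m
  proof (induction m)
    case 0
    show ?case using ksubsets_sum_le unfolding ext_space_def by fastforce
  next
    case (Suc m)
    show ?case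
    proof (intro ballI allI impI)
      fix c :: "nat set \<Rightarrow> 'a" and I assume c: "c \<in> ext_space n k" and lt: "?W < \<Sum>I + Suc m"
      define y where "y = (dop k T ^^ m) c"
      have y: "y \<in> ext_space n k" unfolding y_def using dop_pow_space[of c T k m] c dT by simp
      have IH: "\<And>J. ?W < \<Sum>J + m \<Longrightarrow> y J = 0" using Suc c unfolding y_def by blast
      have "dop k T y I = 0"
      proof (cases "I \<in> ?KS")
        case False
        thus ?thesis using y unfolding dop_def ext_pow_def ext_space_def dT by simp
      next
        case True
        have "ext_pow k T y I = (\<Sum>J\<in>?KS. det (submatrix T I J) * y J)"
          unfolding ext_pow_def dT using True by simp
        also have "\<dots> = det (submatrix T I I) * y I + (\<Sum>J\<in>?KS - {I}. det (submatrix T I J) * y J)"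
          by (rule sum.remove[OF ksubsets_finite True])
        also have "(\<Sum>J\<in>?KS - {I}. det (submatrix T I J) * y J) = 0"
        proof (rule sum.neutral, rule ballI)
          fix J assume J: "J \<in> ?KS - {I}"
          show "det (submatrix T I J) * y J = 0"
          proof (cases "det (submatrix T I J) = 0")
            case False
            with tri True J have "\<Sum>I < \<Sum>J" unfolding tri_prop_def by blast
            with lt have "?W < \<Sum>J + m" by simp
            thus ?thesis using IH by simp
          qed simp
        qed
        finally show ?thesis using diag True unfolding dop_def by simp
      qed
      thus "(dop k T ^^ Suc m) c I = 0" unfolding y_def by simp
    qed
  qed
  show ?thesis
  proof (intro ballI ext)
    fix c :: "nat set \<Rightarrow> 'a" and I assume "c \<in> ext_space n k"
    thus "(dop k T ^^ Suc ?W) c I = 0" using claim[of "Suc ?W"] by simp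
  qed
qed

lemma tri_unip:
  fixes T :: "'a :: idom mat"
  assumes T: "T \<in> carrier_mat n n" and tri: "tri_prop n k T"
    and nil: "\<forall>c\<in>ext_space n k. (dop k T ^^ N) c = (\<lambda>I. 0)"
    and I0: "I0 \<in> ksubsets n k"
  shows "det (submatrix T I0 I0) = 1"
proof -
  let ?KS = "ksubsets n k"
  let ?d = "\<lambda>I J. det (submatrix T I J)"
  define dl where "dl = (\<lambda>J::nat set. if J = I0 then 1 else (0::'a))"
  have dT: "dim_row T = n" using T by auto
  have dl: "dl \<in> ext_space n k" unfolding dl_def ext_space_def using I0 by auto
  have claim: "(dop k T ^^ m) dl I0 = (?d I0 I0 - 1) ^ m \<and>
     (\<forall>J. J \<noteq> I0 \<longrightarrow> \<Sum>I0 \<le> \<Sum>J \<longrightarrow> (dop k T ^^ m) dl J = 0)" for m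
  proof (induction m)
    case 0
    show ?case unfolding dl_def by simp
  next
    case (Suc m)
    define y where "y = (dop k T ^^ m) dl"
    have y: "y \<in> ext_space n k" unfolding y_def using dop_pow_space[of dl T k m] dl dT by simp
    have IH1: "y I0 = (?d I0 I0 - 1) ^ m" and IH2: "\<And>J. J \<noteq> I0 \<Longrightarrow> \<Sum>I0 \<le> \<Sum>J \<Longrightarrow> y J = 0"
      using Suc unfolding y_def by auto
    have step: "dop k T y J = (?d J J - 1) * y J" if J0: "\<Sum>I0 \<le> \<Sum>J" for J
    proof (cases "J \<in> ?KS")
      case False
      thus ?thesis using y unfolding dop_def ext_pow_def ext_space_def dT by simp
    next
      case True
      have "ext_pow k T y J = (\<Sum>L\<in>?KS. ?d J L * y L)"
        unfolding ext_pow_def dT using True by simp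
      also have "\<dots> = ?d J J * y J + (\<Sum>L\<in>?KS - {J}. ?d J L * y L)"
        by (rule sum.remove[OF ksubsets_finite True])
      also have "(\<Sum>L\<in>?KS - {J}. ?d J L * y L) = 0"
      proof (rule sum.neutral, rule ballI)
        fix L assume L: "L \<in> ?KS - {J}"
        show "?d J L * y L = 0"
        proof (cases "?d J L = 0")
          case False
          with tri True L have "\<Sum>J < \<Sum>L" unfolding tri_prop_def by blast
          with J0 have "\<Sum>I0 < \<Sum>L" by simp
          hence "L \<noteq> I0" "\<Sum>I0 \<le> \<Sum>L" by auto
          thus ?thesis using IH2 by simp
        qed simp
      qed
      finally show ?thesis unfolding dop_def by (simp add: algebra_simps)
    qed
    show ?case
    proof
      show "(dop k T ^^ Suc m) dl I0 = (?d I0 I0 - 1) ^ Suc m"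
        using step[of I0] IH1 unfolding y_def by simp
      show "\<forall>J. J \<noteq> I0 \<longrightarrow> \<Sum>I0 \<le> \<Sum>J \<longrightarrow> (dop k T ^^ Suc m) dl J = 0"
        using step IH2 unfolding y_def by simp
    qed
  qed
  have "(?d I0 I0 - 1) ^ N = 0" using claim[of N] nil dl by simp
  thus ?thesis by simp
qed

lemma ut_tri:
  fixes T :: "'a :: comm_ring_1 mat"
  assumes ut: "upper_triangular T" and T: "T \<in> carrier_mat n n"
  shows "tri_prop n k T"
  unfolding tri_prop_def
proof (intro ballI impI)
  fix I J assume I: "I \<in> ksubsets n k" and J: "J \<in> ksubsets n k" and nz: "det (submatrix T I J) \<noteq> 0"
  note ID = ksubsetsD[OF I] and JD = ksubsetsD[OF J]
  let ?U = "{0..<k}"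
  let ?M = "submatrix T I J"
  have M: "?M \<in> carrier_mat k k" by (rule submatrix_carrier_k[OF T I J])
  from nz obtain p where p: "p \<in> {p. p permutes ?U}" and
    pnz: "signof p * (\<Prod>a\<in>?U. ?M $$ (a, p a)) \<noteq> 0"
    unfolding det_def'[OF M] using sum.not_neutral_contains_not_neutral by blast
  have p': "p permutes ?U" using p by simp
  have pk: "\<And>a. a < k \<Longrightarrow> p a < k" using permutes_in_image[OF p'] by auto
  have le: "pick I a \<le> pick J (p a)" if a: "a \<in> ?U" for a
  proof (rule ccontr)
    assume "\<not> ?thesis"
    hence lt: "pick J (p a) < pick I a" by simp
    have "pick I a < n" using pick_in_set[of a I] ID a by auto
    hence "T $$ (pick I a, pick J (p a)) = 0" using ut T lt by (auto simp: upper_triangular_def)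
    hence "?M $$ (a, p a) = 0" using submatrix_index_k[OF T I J, of a "p a"] a pk[of a] by simp
    hence "(\<Prod>a\<in>?U. ?M $$ (a, p a)) = 0" using a by (intro prod_zero) auto
    thus False using pnz by simp
  qed
  have sI: "\<Sum>I = (\<Sum>a\<in>?U. pick I a)"
    using sum.reindex_bij_betw[OF pick_bij[OF ID(3) ID(2)], of id] by simp
  have sJ: "\<Sum>J = (\<Sum>a\<in>?U. pick J (p a))"
  proof -
    have "\<Sum>J = (\<Sum>a\<in>?U. pick J a)"
      using sum.reindex_bij_betw[OF pick_bij[OF JD(3) JD(2)], of id] by simp
    also have "\<dots> = (\<Sum>a\<in>?U. pick J (p a))"
      using sum.reindex_bij_betw[OF permutes_imp_bij[OF p'], of "pick J"] by simp
    finally show ?thesis .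
  qed
  have "\<Sum>I \<le> \<Sum>J" unfolding sI sJ using le by (intro sum_mono) auto
  moreover have "\<Sum>I = \<Sum>J \<Longrightarrow> I = J"
  proof -
    assume eq: "\<Sum>I = \<Sum>J"
    have pe: "\<And>a. a \<in> ?U \<Longrightarrow> pick I a = pick J (p a)"
      using sum_mono_inv[OF eq[unfolded sI sJ] le] by auto
    have "I = pick I ` ?U" using pick_bij[OF ID(3) ID(2)] unfolding bij_betw_def by simp
    also have "\<dots> = pick J ` (p ` ?U)" using pe by (auto simp: image_iff)
    also have "p ` ?U = ?U" by (rule permutes_image[OF p'])
    also have "pick J ` ?U = J" using pick_bij[OF JD(3) JD(2)] unfolding bij_betw_def by simp
    finally show "I = J" .
  qed
  ultimately show "I = J \<or> \<Sum>I < \<Sum>J" by linarith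
qed

lemma ut_diag:
  fixes T :: "'a :: comm_ring_1 mat"
  assumes ut: "upper_triangular T" and T: "T \<in> carrier_mat n n" and I: "I \<in> ksubsets n k"
  shows "det (submatrix T I I) = (\<Prod>i\<in>I. T $$ (i, i))"
proof -
  note ID = ksubsetsD[OF I]
  let ?M = "submatrix T I I"
  have M: "?M \<in> carrier_mat k k" by (rule submatrix_carrier_k[OF T I I])
  have utM: "upper_triangular ?M"
  proof (rule upper_triangularI)
    fix a b assume ba: "b < a" and a: "a < dim_row ?M"
    hence ak: "a < k" and bk: "b < k" using M by auto
    have "pick I b < pick I a" using pick_mono[of a I b] ba ak ID by auto
    moreover have "pick I a < n" using pick_in_set[of a I] ID ak by auto
    ultimately have "T $$ (pick I a, pick I b) = 0" using ut T by (auto simp: upper_triangular_def)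
    thus "?M $$ (a, b) = 0" using submatrix_index_k[OF T I I ak bk] by simp
  qed
  have "det ?M = (\<Prod>a = 0..<k. ?M $$ (a, a))"
    using det_upper_triangular[OF utM M] M by (simp add: prod_list_diag_prod)
  also have "\<dots> = (\<Prod>a = 0..<k. T $$ (pick I a, pick I a))"
    by (rule prod.cong[OF refl], simp add: submatrix_index_k[OF T I I])
  also have "\<dots> = (\<Prod>i\<in>I. T $$ (i, i))"
    using prod.reindex_bij_betw[OF pick_bij[OF ID(3) ID(2)], of "\<lambda>i. T $$ (i, i)"] by simp
  finally show ?thesis .
qed


lemma invertible_from_eigvec:
  fixes v :: "'b :: field vec"
  assumes v: "v \<in> carrier_vec n" and v0: "v \<noteq> 0\<^sub>v n"
  shows "\<exists>W W'. W \<in> carrier_mat n n \<and> W' \<in> carrier_mat n n \<and> W' * W = 1\<^sub>m n \<and> W * W' = 1\<^sub>m n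
     \<and> col W 0 = v"
proof -
  interpret vec_space "TYPE('b)" n .
  define b where "b = basis_completion v"
  note bc = basis_completion[OF v v0, folded b_def]
  define W where "W = mat_of_cols n b"
  have W: "W \<in> carrier_mat n n" unfolding W_def using bc mat_of_cols_carrier(1)[of n b] by simp
  have cW: "cols W = b" unfolding W_def using bc by simp
  have n0: "0 < n" using v v0 by (cases n) auto
  have b0: "b ! 0 = v" using bc n0 by (cases b) auto
  have colW: "col W 0 = v" unfolding W_def using bc n0 b0 v by (subst col_mat_of_cols) auto
  have "det W \<noteq> 0"
  proof
    assume "det W = 0"
    then obtain u where u: "u \<in> carrier_vec n" "u \<noteq> 0\<^sub>v n" "W *\<^sub>v u = 0\<^sub>v n"
      using det_0_iff_vec_prod_zero_field[OF W] by blast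
    have "lin_dep (set (cols W))" by (rule lin_depI[OF W u], insert bc cW, auto)
    thus False using bc cW by simp
  qed
  from det_non_zero_imp_unit[OF W this, of "()"]
  obtain W' where W': "W' \<in> carrier_mat n n" "W' * W = 1\<^sub>m n" "W * W' = 1\<^sub>m n"
    unfolding Units_def ring_mat_def by auto
  show ?thesis using W W' colW by blast
qed

lemma triangularize:
  fixes A :: "'b :: alg_closed_field mat"
  assumes "A \<in> carrier_mat n n"
  shows "\<exists>T P Q. similar_mat_wit A T P Q \<and> upper_triangular T"
  using assms
proof (induction n arbitrary: A)
  case 0
  have "similar_mat_wit A A (1\<^sub>m 0) (1\<^sub>m 0)" by (rule similar_mat_wit_refl[OF 0])
  moreover have "upper_triangular A" using 0 by (auto simp: upper_triangular_def)
  ultimately show ?case by blast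
next
  case (Suc m A)
  let ?n = "Suc m"
  have A: "A \<in> carrier_mat ?n ?n" by fact
  have "Polynomial.degree (char_poly A) = ?n" using degree_monic_char_poly[OF A] by simp
  then obtain e where "Polynomial.poly (char_poly A) e = 0" using alg_closed_imp_poly_has_root[of "char_poly A"] by auto
  hence "eigenvalue A e" using eigenvalue_root_char_poly[OF A] by simp
  then obtain v where ev: "eigenvector A v e" unfolding eigenvalue_def by blast
  hence v: "v \<in> carrier_vec ?n" and v0: "v \<noteq> 0\<^sub>v ?n" and Av: "A *\<^sub>v v = e \<cdot>\<^sub>v v"
    using A unfolding eigenvector_def by auto
  obtain W W' where W: "W \<in> carrier_mat ?n ?n" and W': "W' \<in> carrier_mat ?n ?n"
    and W'W: "W' * W = 1\<^sub>m ?n" and WW': "W * W' = 1\<^sub>m ?n" and colW: "col W 0 = v"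
    using invertible_from_eigvec[OF v v0] by blast
  define A' where "A' = W' * A * W"
  have A': "A' \<in> carrier_mat ?n ?n" unfolding A'_def using W W' A by auto
  have simAA': "similar_mat_wit A A' W W'"
  proof (rule similar_mat_witI[OF WW' W'W _ A A' W W'])
    have "W * A' * W' = (W * W') * A * (W * W')" unfolding A'_def using W W' A
      by (simp add: assoc_mult_mat[of _ ?n ?n _ ?n _ ?n])
    also have "\<dots> = A" using WW' A by simp
    finally show "A = W * A' * W'" by simp
  qed
  have colA': "col A' 0 = e \<cdot>\<^sub>v unit_vec ?n 0"
  proof -
    have "col A' 0 = (W' * A) *\<^sub>v col W 0" unfolding A'_def using W W' A by (intro col_mult2) auto
    also have "\<dots> = W' *\<^sub>v (A *\<^sub>v v)" unfolding colW using W' A v by simp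
    also have "\<dots> = e \<cdot>\<^sub>v (W' *\<^sub>v v)" unfolding Av using W' v by (rule mult_mat_vec)
    also have "W' *\<^sub>v v = col (W' * W) 0" unfolding colW[symmetric] using W' W by (intro col_mult2[symmetric]) auto
    also have "\<dots> = unit_vec ?n 0" unfolding W'W by simp
    finally show ?thesis .
  qed
  have A'0: "\<And>i. i < ?n \<Longrightarrow> A' $$ (i, 0) = (if i = 0 then e else 0)"
  proof -
    fix i assume i: "i < ?n"
    have "A' $$ (i, 0) = col A' 0 $ i" using A' i by simp
    also have "\<dots> = (if i = 0 then e else 0)" unfolding colA' using i by simp
    finally show "A' $$ (i, 0) = (if i = 0 then e else 0)" .
  qed
  obtain A1 A2 A0 A3 where splitA': "split_block A' 1 1 = (A1, A2, A0, A3)"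
    by (cases "split_block A' 1 1") auto
  have dA': "dim_row A' = 1 + m" "dim_col A' = 1 + m" using A' by auto
  note sb = split_block[OF splitA' dA']
  have A1id: "A1 = mat 1 1 (\<lambda>_. e)"
    using splitA'[unfolded split_block_def Let_def] A'0[of 0] by auto
  have A0id: "A0 = 0\<^sub>m m 1"
    using splitA'[unfolded split_block_def Let_def] A'0 dA' by auto
  from Suc.IH[OF sb(4)] obtain B P' Q' where simIH: "similar_mat_wit A3 B P' Q'" and utB: "upper_triangular B"
    by blast
  note S' = similar_mat_witD2[OF sb(4) simIH]
  let ?P' = "four_block_mat (1\<^sub>m 1) (0\<^sub>m 1 m) (0\<^sub>m m 1) P'"
  let ?Q' = "four_block_mat (1\<^sub>m 1) (0\<^sub>m 1 m) (0\<^sub>m m 1) Q'"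
  define C where "C = four_block_mat A1 (A2 * P') A0 B"
  have A0_eq: "A0 = P' * A0 * 1\<^sub>m 1" unfolding A0id using S' by auto
  have A2_eq: "A2 = 1\<^sub>m 1 * (A2 * P') * Q'"
  proof -
    have "1\<^sub>m 1 * (A2 * P') * Q' = A2 * (P' * Q')" using sb S' by (simp add: assoc_mult_mat[of _ 1 m _ m _ m])
    also have "\<dots> = A2" using S' sb by simp
    finally show ?thesis by simp
  qed
  have simA'C: "similar_mat_wit A' C ?P' ?Q'"
    unfolding sb(5) C_def
    by (rule similar_mat_wit_four_block[OF similar_mat_wit_refl[OF sb(1)] simIH A2_eq A0_eq sb(1) sb(4) sb(3)],
      insert sb S', auto)
  have ut: "upper_triangular C" unfolding C_def A0id
    by (rule upper_triangular_four_block[OF sb(1) S'(5) _ utB]) (auto simp: A1id upper_triangular_def)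
  from similar_mat_wit_trans[OF simAA' simA'C] ut show ?case by blast
qed


lemma ut_pow:
  fixes U :: "'a :: comm_ring_1 mat"
  assumes ut: "upper_triangular U" and U: "U \<in> carrier_mat n n"
  shows "upper_triangular (U ^\<^sub>m m) \<and> (\<forall>i<n. (U ^\<^sub>m m) $$ (i, i) = U $$ (i, i) ^ m)"
proof (induction m)
  case 0
  show ?case using U by (auto simp: upper_triangular_def)
next
  case (Suc m)
  have Um: "U ^\<^sub>m m \<in> carrier_mat n n" using U by simp
  have idx: "(U ^\<^sub>m Suc m) $$ (i, j) = (\<Sum>l<n. (U ^\<^sub>m m) $$ (i, l) * U $$ (l, j))"
    if "i < n" "j < n" for i j
    using that Um U by (auto simp: scalar_prod_def atLeast0LessThan intro!: sum.cong)
  have z1: "(U ^\<^sub>m m) $$ (i, l) = 0" if "l < i" "i < n" for i l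
    using Suc.IH that Um by (auto simp: upper_triangular_def)
  have z2: "U $$ (l, j) = 0" if "j < l" "l < n" for j l
    using ut that U by (auto simp: upper_triangular_def)
  have "upper_triangular (U ^\<^sub>m Suc m)"
  proof (rule upper_triangularI)
    fix i j assume ji: "j < i" and i: "i < dim_row (U ^\<^sub>m Suc m)"
    hence i': "i < n" using U by simp
    have "(U ^\<^sub>m Suc m) $$ (i, j) = (\<Sum>l<n. (U ^\<^sub>m m) $$ (i, l) * U $$ (l, j))"
      using idx[OF i'] ji i' by simp
    also have "\<dots> = 0"
    proof (rule sum.neutral, rule ballI)
      fix l assume l: "l \<in> {..<n}"
      show "(U ^\<^sub>m m) $$ (i, l) * U $$ (l, j) = 0"
        using z1[of l i] z2[of j l] l ji i' by (cases "l < i") auto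
    qed
    finally show "(U ^\<^sub>m Suc m) $$ (i, j) = 0" .
  qed
  moreover have "(U ^\<^sub>m Suc m) $$ (i, i) = U $$ (i, i) ^ Suc m" if i: "i < n" for i
  proof -
    have "(U ^\<^sub>m Suc m) $$ (i, i) = (\<Sum>l<n. (U ^\<^sub>m m) $$ (i, l) * U $$ (l, i))" using idx i by simp
    also have "\<dots> = (U ^\<^sub>m m) $$ (i, i) * U $$ (i, i) + (\<Sum>l\<in>{..<n} - {i}. (U ^\<^sub>m m) $$ (i, l) * U $$ (l, i))"
      by (rule sum.remove) (use i in auto)
    also have "(\<Sum>l\<in>{..<n} - {i}. (U ^\<^sub>m m) $$ (i, l) * U $$ (l, i)) = 0"
    proof (rule sum.neutral, rule ballI)
      fix l assume "l \<in> {..<n} - {i}"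
      thus "(U ^\<^sub>m m) $$ (i, l) * U $$ (l, i) = 0" using z1[of l i] z2[of i l] i
        by (cases "l < i") auto
    qed
    finally show ?thesis using Suc.IH i by (simp add: mult.commute)
  qed
  ultimately show ?case by simp
qed

lemma strict_ut_nilp:
  fixes U :: "'a :: comm_ring_1 mat"
  assumes U: "U \<in> carrier_mat n n" and z: "\<And>i j. i < n \<Longrightarrow> j < n \<Longrightarrow> j \<le> i \<Longrightarrow> U $$ (i, j) = 0"
  shows "U ^\<^sub>m n = 0\<^sub>m n n"
proof -
  have claim: "\<forall>i<n. \<forall>j<n. j < i + m \<longrightarrow> (U ^\<^sub>m m) $$ (i, j) = 0" for m
  proof (induction m)
    case 0
    show ?case using U by simp
  next
    case (Suc m)
    have Um: "U ^\<^sub>m m \<in> carrier_mat n n" using U by simp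
    show ?case
    proof (intro allI impI)
      fix i j assume i: "i < n" and j: "j < n" and lt: "j < i + Suc m"
      have "(U ^\<^sub>m Suc m) $$ (i, j) = (\<Sum>l<n. (U ^\<^sub>m m) $$ (i, l) * U $$ (l, j))"
        using i j Um U by (auto simp: scalar_prod_def atLeast0LessThan intro!: sum.cong)
      also have "\<dots> = 0"
      proof (rule sum.neutral, rule ballI)
        fix l assume l: "l \<in> {..<n}"
        show "(U ^\<^sub>m m) $$ (i, l) * U $$ (l, j) = 0"
          using Suc.IH i l z[of l j] j lt by (cases "l < i + m") auto
      qed
      finally show "(U ^\<^sub>m Suc m) $$ (i, j) = 0" .
    qed
  qed
  show ?thesis
    by (rule eq_matI, insert claim[of n] U, auto)
qed

definition mtrace :: "'a :: comm_ring_1 mat \<Rightarrow> 'a" where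
  "mtrace M = (\<Sum>i<dim_row M. M $$ (i, i))"

lemma mtrace_comm:
  fixes A B :: "'a :: comm_ring_1 mat"
  assumes A: "A \<in> carrier_mat n m" and B: "B \<in> carrier_mat m n"
  shows "mtrace (A * B) = mtrace (B * A)"
proof -
  have "mtrace (A * B) = (\<Sum>i<n. \<Sum>l<m. A $$ (i, l) * B $$ (l, i))"
    unfolding mtrace_def using A B by (auto simp: scalar_prod_def atLeast0LessThan intro!: sum.cong)
  also have "\<dots> = (\<Sum>l<m. \<Sum>i<n. B $$ (l, i) * A $$ (i, l))"
    by (subst sum.swap) (simp add: mult.commute)
  also have "\<dots> = mtrace (B * A)"
    unfolding mtrace_def using A B by (auto simp: scalar_prod_def atLeast0LessThan intro!: sum.cong)
  finally show ?thesis .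
qed

lemma mtrace_sim:
  fixes A :: "'a :: comm_ring_1 mat"
  assumes sim: "similar_mat_wit A T P Q" and A: "A \<in> carrier_mat n n"
  shows "mtrace A = mtrace T"
proof -
  note S = similar_mat_witD2[OF A sim]
  have "mtrace A = mtrace ((P * T) * Q)" using S by simp
  also have "\<dots> = mtrace (Q * (P * T))" by (rule mtrace_comm, insert S, auto)
  also have "Q * (P * T) = (Q * P) * T" by (rule assoc_mult_mat[symmetric]) (use S in auto)
  also have "\<dots> = T" using S by simp
  finally show ?thesis .
qed

lemma sim_smult_minus_one:
  fixes A :: "'a :: comm_ring_1 mat"
  assumes sim: "similar_mat_wit A T P Q" and A: "A \<in> carrier_mat n n"
  shows "similar_mat_wit (c \<cdot>\<^sub>m A - 1\<^sub>m n) (c \<cdot>\<^sub>m T - 1\<^sub>m n) P Q"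
proof -
  note S = similar_mat_witD2[OF A sim]
  show ?thesis
  proof (rule similar_mat_witI[OF S(1) S(2)])
    have "P * (c \<cdot>\<^sub>m T - 1\<^sub>m n) * Q = (P * (c \<cdot>\<^sub>m T) - P * 1\<^sub>m n) * Q"
      using S by (subst mult_minus_distrib_mat[of _ n n]) auto
    also have "\<dots> = P * (c \<cdot>\<^sub>m T) * Q - P * 1\<^sub>m n * Q"
      using S by (subst minus_mult_distrib_mat[of _ n n]) auto
    also have "P * (c \<cdot>\<^sub>m T) * Q = c \<cdot>\<^sub>m (P * T * Q)"
      using S by (simp add: mult_smult_distrib[of _ n n _ n] mult_smult_assoc_mat[of _ n n _ n])
    also have "P * 1\<^sub>m n * Q = 1\<^sub>m n" using S by simp
    finally show "c \<cdot>\<^sub>m A - 1\<^sub>m n = P * (c \<cdot>\<^sub>m T - 1\<^sub>m n) * Q" using S by simp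
  qed (insert S, auto)
qed

lemma prod_all_equal:
  fixes t :: "nat \<Rightarrow> 'b :: field"
  assumes k: "0 < k" "k < n" and p: "\<forall>I\<in>ksubsets n k. (\<Prod>i\<in>I. t i) = 1"
  shows "\<forall>i<n. t i = t 0"
proof (intro allI impI)
  fix i assume i: "i < n"
  show "t i = t 0"
  proof (cases "i = 0")
    case False
    let ?R = "{0..<n} - {i, 0}"
    have cR: "card ?R = n - 2" using i False by (simp add: card_Diff_subset)
    have "k - 1 \<le> card ?R" using cR k by simp
    then obtain S where S: "S \<subseteq> ?R" "card S = k - 1" "finite S"
      using obtain_subset_with_card_n by metis
    have iS: "i \<notin> S" and zS: "0 \<notin> S" using S by auto
    have I1: "insert i S \<in> ksubsets n k" unfolding ksubsets_def using S iS i k by auto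
    have I2: "insert 0 S \<in> ksubsets n k" unfolding ksubsets_def using S zS k by auto
    have "(\<Prod>j\<in>insert i S. t j) = 1" using p I1 by blast
    hence e1: "t i * (\<Prod>j\<in>S. t j) = 1" using S iS by simp
    have "(\<Prod>j\<in>insert 0 S. t j) = 1" using p I2 by blast
    hence e2: "t 0 * (\<Prod>j\<in>S. t j) = 1" using S zS by simp
    have nz: "(\<Prod>j\<in>S. t j) \<noteq> 0" using e1 by auto
    have "t i * (\<Prod>j\<in>S. t j) = t 0 * (\<Prod>j\<in>S. t j)" using e1 e2 by simp
    thus ?thesis using nz by simp
  qed simp
qed


interpretation to_ac_hom: comm_ring_hom "to_ac :: 'a :: field \<Rightarrow> 'a alg_closure"
  by unfold_locales auto

lemma submatrix_map: "submatrix (map_mat f A) I J = map_mat f (submatrix A I J)"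
proof (rule eq_matI)
  fix a b assume a: "a < dim_row (map_mat f (submatrix A I J))" and b: "b < dim_col (map_mat f (submatrix A I J))"
  hence a': "a < card {i. i < dim_row A \<and> i \<in> I}" and b': "b < card {j. j < dim_col A \<and> j \<in> J}"
    by (auto simp: dim_submatrix)
  have "pick I a < dim_row A" using pick_le[OF a'] .
  moreover have "pick J b < dim_col A" using pick_le[OF b'] .
  ultimately show "submatrix (map_mat f A) I J $$ (a, b) = map_mat f (submatrix A I J) $$ (a, b)"
    using a' b' by (simp add: submatrix_index dim_submatrix)
qed (auto simp: dim_submatrix)

lemma ext_pow_map:
  fixes A :: "'a :: field mat"
  shows "ext_pow k (map_mat to_ac A) (\<lambda>I. to_ac (c I)) = (\<lambda>I. to_ac (ext_pow k A c I))"
  unfolding ext_pow_def submatrix_map to_ac_hom.hom_det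
  by (auto simp: to_ac_sum)

lemma dop_map:
  fixes A :: "'a :: field mat"
  shows "(dop k (map_mat to_ac A) ^^ N) (\<lambda>I. to_ac (c I)) = (\<lambda>I. to_ac ((dop k A ^^ N) c I))"
proof (induction N)
  case (Suc N)
  define y where "y = (dop k A ^^ N) c"
  have "(dop k (map_mat to_ac A) ^^ Suc N) (\<lambda>I. to_ac (c I)) = dop k (map_mat to_ac A) (\<lambda>I. to_ac (y I))"
    using Suc unfolding y_def by simp
  also have "\<dots> = (\<lambda>I. ext_pow k (map_mat to_ac A) (\<lambda>I. to_ac (y I)) I - to_ac (y I))"
    unfolding dop_def ..
  also have "\<dots> = (\<lambda>I. to_ac (ext_pow k A y I - y I))"
    unfolding ext_pow_map by simp
  also have "\<dots> = (\<lambda>I. to_ac ((dop k A ^^ Suc N) c I))"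
    unfolding y_def dop_def by simp
  finally show ?case .
qed simp

lemma dop_lin1:
  fixes A :: "'a :: comm_ring_1 mat"
  shows "dop k A (\<lambda>I. \<Sum>J\<in>S. a J * v J I) = (\<lambda>I. \<Sum>J\<in>S. a J * dop k A (v J) I)"
proof (rule ext)
  fix I
  let ?KS = "ksubsets (dim_row A) k"
  have "ext_pow k A (\<lambda>I. \<Sum>J\<in>S. a J * v J I) I = (\<Sum>J\<in>S. a J * ext_pow k A (v J) I)"
  proof (cases "I \<in> ?KS")
    case True
    have "ext_pow k A (\<lambda>I. \<Sum>J\<in>S. a J * v J I) I = (\<Sum>L\<in>?KS. det (submatrix A I L) * (\<Sum>J\<in>S. a J * v J L))"
      unfolding ext_pow_def using True by simp
    also have "\<dots> = (\<Sum>L\<in>?KS. \<Sum>J\<in>S. a J * (det (submatrix A I L) * v J L))"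
      by (simp add: sum_distrib_left mult.left_commute)
    also have "\<dots> = (\<Sum>J\<in>S. \<Sum>L\<in>?KS. a J * (det (submatrix A I L) * v J L))"
      by (rule sum.swap)
    also have "\<dots> = (\<Sum>J\<in>S. a J * ext_pow k A (v J) I)"
      unfolding ext_pow_def using True by (simp add: sum_distrib_left)
    finally show ?thesis .
  next
    case False
    thus ?thesis unfolding ext_pow_def by simp
  qed
  thus "dop k A (\<lambda>I. \<Sum>J\<in>S. a J * v J I) I = (\<Sum>J\<in>S. a J * dop k A (v J) I)"
    unfolding dop_def by (simp add: right_diff_distrib sum_subtractf)
qed

lemma dop_lin:
  fixes A :: "'a :: comm_ring_1 mat"
  shows "(dop k A ^^ N) (\<lambda>I. \<Sum>J\<in>S. a J * v J I) = (\<lambda>I. \<Sum>J\<in>S. a J * (dop k A ^^ N) (v J) I)"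
proof (induction N)
  case (Suc N)
  show ?case using Suc dop_lin1[where v = "\<lambda>J. (dop k A ^^ N) (v J)" and S = S and a = a and k = k and A = A] by simp
qed simp

lemma nv_le_1:
  fixes nv :: "'a :: field_char_0 \<Rightarrow> real"
  assumes nv: "is_Ql_absval l nv" and g: "g ^ k = 1" and k: "0 < k"
  shows "nv g \<le> 1"
proof -
  have mult: "\<And>x y. nv (x * y) = nv x * nv y" and pos: "\<And>x. nv x \<ge> 0"
    and oi: "\<And>m::int. nv (of_int m) = padic_abs_int l m"
    using nv unfolding is_Ql_absval_def by auto
  have one: "nv 1 = 1" using oi[of 1] unfolding padic_abs_int_def by simp
  have pw: "nv (x ^ m) = nv x ^ m" for x m
    by (induction m) (auto simp: one mult)
  have "nv g ^ k = 1" using pw[of g k] g one by simp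
  show ?thesis
  proof (rule ccontr)
    assume "\<not> ?thesis"
    hence "1 < nv g ^ k" using k by simp
    thus False using \<open>nv g ^ k = 1\<close> by simp
  qed
qed


lemma map_smult_minus_one:
  fixes M :: "'a :: field mat"
  assumes M: "M \<in> carrier_mat n n"
  shows "map_mat to_ac (g \<cdot>\<^sub>m M - 1\<^sub>m n) = to_ac g \<cdot>\<^sub>m map_mat to_ac M - 1\<^sub>m n"
  by (rule eq_matI, insert M, auto)

lemma map_zero_imp:
  fixes M :: "'a :: field mat"
  assumes M: "M \<in> carrier_mat n n" and z: "map_mat to_ac M = 0\<^sub>m n n"
  shows "M = 0\<^sub>m n n"
proof (rule eq_matI)
  fix i j assume "i < dim_row (0\<^sub>m n n :: 'a mat)" "j < dim_col (0\<^sub>m n n :: 'a mat)"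
  hence ij: "i < n" "j < n" by auto
  have "map_mat to_ac M $$ (i, j) = 0" using z ij by simp
  thus "M $$ (i, j) = 0\<^sub>m n n $$ (i, j)" using M ij by simp
qed (insert M, auto)

lemma forward_dir:
  fixes nv :: "'a::field_char_0 \<Rightarrow> real" and A :: "'a mat"
  assumes nv: "is_Ql_absval l nv"
    and A: "A \<in> carrier_mat n n"
    and k0: "0 < k" and kn: "k < n"
    and unipA: "ext_pow_unipotent k A"
  shows "\<exists>\<gamma>::'a. \<gamma> ^ k = 1 \<and> nv \<gamma> \<le> 1 \<and> unipotent_mat (\<gamma> \<cdot>\<^sub>m A)"
proof -
  have An: "dim_row A = n" using A by auto
  let ?KS = "ksubsets n k"
  define A' where "A' = map_mat (to_ac :: 'a \<Rightarrow> 'a alg_closure) A"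
  have A': "A' \<in> carrier_mat n n" using A unfolding A'_def by auto
  from unipA obtain N where N: "\<forall>c\<in>ext_space n k. (dop k A ^^ N) c = (\<lambda>I. 0)"
    unfolding unip_iff An by blast
  obtain T P Q where sim: "similar_mat_wit A' T P Q" and ut: "upper_triangular T"
    using triangularize[OF A'] by blast
  note S = similar_mat_witD2[OF A' sim]
  define dl :: "nat set \<Rightarrow> nat set \<Rightarrow> 'a" where "dl J = (\<lambda>I. if I = J then 1 else (0::'a))" for J
  have dlsp: "dl J \<in> ext_space n k" if "J \<in> ?KS" for J
    using that unfolding dl_def ext_space_def by auto
  have NA': "\<forall>c\<in>ext_space n k. (dop k A' ^^ N) c = (\<lambda>I. 0)"
  proof
    fix c :: "nat set \<Rightarrow> 'a alg_closure" assume c: "c \<in> ext_space n k"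
    have cexp: "c = (\<lambda>I. \<Sum>J\<in>?KS. c J * to_ac (dl J I))"
    proof (rule ext)
      fix I
      show "c I = (\<Sum>J\<in>?KS. c J * to_ac (dl J I))"
      proof (cases "I \<in> ?KS")
        case True
        have "(\<Sum>J\<in>?KS. c J * to_ac (dl J I)) = (\<Sum>J\<in>?KS. if I = J then c J else 0)"
          by (rule sum.cong) (auto simp: dl_def)
        also have "\<dots> = c I" using True ksubsets_finite[of n k] by simp
        finally show ?thesis by simp
      next
        case False
        have "(\<Sum>J\<in>?KS. c J * to_ac (dl J I)) = 0"
          by (rule sum.neutral) (use False in \<open>auto simp: dl_def\<close>)
        thus ?thesis using c False unfolding ext_space_def by simp
      qed
    qed
    have "(dop k A' ^^ N) c = (\<lambda>I. \<Sum>J\<in>?KS. c J * (dop k A' ^^ N) (\<lambda>I. to_ac (dl J I)) I)"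
      by (subst cexp, rule dop_lin)
    also have "\<dots> = (\<lambda>I. 0)"
    proof (rule ext, rule sum.neutral, rule ballI)
      fix I J assume J: "J \<in> ?KS"
      have "(dop k A' ^^ N) (\<lambda>I. to_ac (dl J I)) = (\<lambda>I. to_ac ((dop k A ^^ N) (dl J) I))"
        unfolding A'_def by (rule dop_map)
      also have "\<dots> = (\<lambda>I. 0)" using N dlsp[OF J] by simp
      finally show "c J * (dop k A' ^^ N) (\<lambda>I. to_ac (dl J I)) I = 0" by simp
    qed
    finally show "(dop k A' ^^ N) c = (\<lambda>I. 0)" .
  qed
  have NT: "\<forall>c\<in>ext_space n k. (dop k T ^^ N) c = (\<lambda>I. 0)"
    by (rule nilp_transfer[OF similar_mat_wit_sym[OF sim] S(5) NA'])
  have tri: "tri_prop n k T" by (rule ut_tri[OF ut S(5)])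
  have prod1: "\<forall>I\<in>?KS. (\<Prod>i\<in>I. T $$ (i, i)) = 1"
  proof
    fix I assume I: "I \<in> ?KS"
    show "(\<Prod>i\<in>I. T $$ (i, i)) = 1"
      using tri_unip[OF S(5) tri NT I] ut_diag[OF ut S(5) I] by simp
  qed
  define lam where "lam = T $$ (0, 0)"
  have alleq: "\<forall>i<n. T $$ (i, i) = lam"
    using prod_all_equal[OF k0 kn prod1] unfolding lam_def by blast
  have I0: "{0..<k} \<in> ?KS" unfolding ksubsets_def using kn by auto
  have "(\<Prod>i\<in>{0..<k}. T $$ (i, i)) = 1" using prod1 I0 by blast
  moreover have "(\<Prod>i\<in>{0..<k}. T $$ (i, i)) = (\<Prod>i\<in>{0..<k}. lam)"
    by (rule prod.cong) (use alleq kn in auto)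
  moreover have "(\<Prod>i\<in>{0..<k}. lam) = lam ^ k" by simp
  ultimately have lamk: "lam ^ k = 1" by simp
  have lam0: "lam \<noteq> 0" using lamk k0 by (cases k) auto
  have n0: "n \<noteq> 0" using kn by simp
  have "mtrace A' = mtrace T" by (rule mtrace_sim[OF sim A'])
  also have "\<dots> = (\<Sum>i<n. lam)" unfolding mtrace_def using S(5) alleq by simp
  also have "\<dots> = of_nat n * lam" by simp
  finally have tr: "mtrace A' = of_nat n * lam" .
  have trA: "mtrace A' = to_ac (mtrace A)"
    unfolding mtrace_def A'_def using A by (simp add: to_ac_sum)
  define g where "g = inverse (mtrace A / of_nat n)"
  have gl: "to_ac g = inverse lam"
    unfolding g_def using tr trA n0 by (simp add: inverse_eq_divide)
  have gk: "g ^ k = 1"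
  proof -
    have "to_ac (g ^ k) = inverse (lam ^ k)" using gl by (simp add: power_inverse)
    also have "\<dots> = to_ac (1::'a)" using lamk by simp
    finally have "to_ac (g ^ k) = to_ac (1::'a)" .
    thus ?thesis using injD[OF inj_to_ac] by blast
  qed
  have nvg: "nv g \<le> 1" by (rule nv_le_1[OF nv gk k0])
  have unip: "unipotent_mat (g \<cdot>\<^sub>m A)"
  proof -
    let ?M = "g \<cdot>\<^sub>m A - 1\<^sub>m n"
    have M: "?M \<in> carrier_mat n n" by (rule minus_carrier_mat) simp
    have dimr: "dim_row (g \<cdot>\<^sub>m A) = n" using A by simp
    have simX: "similar_mat_wit (to_ac g \<cdot>\<^sub>m A' - 1\<^sub>m n) (to_ac g \<cdot>\<^sub>m T - 1\<^sub>m n) P Q"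
      by (rule sim_smult_minus_one[OF sim A'])
    have X: "to_ac g \<cdot>\<^sub>m T - 1\<^sub>m n \<in> carrier_mat n n" by (rule minus_carrier_mat) simp
    have Xz: "(to_ac g \<cdot>\<^sub>m T - 1\<^sub>m n) ^\<^sub>m n = 0\<^sub>m n n"
    proof (rule strict_ut_nilp[OF X])
      fix i j assume ij: "i < n" "j < n" "j \<le> i"
      show "(to_ac g \<cdot>\<^sub>m T - 1\<^sub>m n) $$ (i, j) = 0"
      proof (cases "j = i")
        case True
        thus ?thesis using ij S alleq gl lam0 by simp
      next
        case False
        hence "T $$ (i, j) = 0" using ut ij S by (auto simp: upper_triangular_def)
        thus ?thesis using ij S False by simp
      qed
    qed
    have "(to_ac g \<cdot>\<^sub>m A' - 1\<^sub>m n) ^\<^sub>m n = P * (to_ac g \<cdot>\<^sub>m T - 1\<^sub>m n) ^\<^sub>m n * Q"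
      by (rule similar_mat_wit_pow_id[OF simX])
    also have "\<dots> = 0\<^sub>m n n" using Xz S by simp
    finally have z': "(to_ac g \<cdot>\<^sub>m A' - 1\<^sub>m n) ^\<^sub>m n = 0\<^sub>m n n" .
    have "map_mat to_ac (?M ^\<^sub>m n) = (map_mat to_ac ?M) ^\<^sub>m n"
      by (rule to_ac_hom.mat_hom_pow[OF M])
    also have "map_mat to_ac ?M = to_ac g \<cdot>\<^sub>m A' - 1\<^sub>m n"
      unfolding A'_def by (rule map_smult_minus_one[OF A])
    finally have "map_mat to_ac (?M ^\<^sub>m n) = 0\<^sub>m n n" using z' by simp
    hence "?M ^\<^sub>m n = 0\<^sub>m n n" by (rule map_zero_imp[rotated], insert M, simp)
    thus ?thesis unfolding unipotent_mat_def dimr by blast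
  qed
  show ?thesis using gk nvg unip by blast
qed


lemma unip_ext_pow:
  fixes B :: "'a::field mat"
  assumes B: "B \<in> carrier_mat n n" and uN: "(B - 1\<^sub>m n) ^\<^sub>m N = 0\<^sub>m n n"
  shows "ext_pow_unipotent k B"
proof -
  have Bn: "dim_row B = n" using B by auto
  define B' where "B' = map_mat (to_ac :: 'a \<Rightarrow> 'a alg_closure) B"
  have B': "B' \<in> carrier_mat n n" using B unfolding B'_def by auto
  obtain T P Q where sim: "similar_mat_wit B' T P Q" and ut: "upper_triangular T"
    using triangularize[OF B'] by blast
  note S = similar_mat_witD2[OF B' sim]
  have simX: "similar_mat_wit (1 \<cdot>\<^sub>m B' - 1\<^sub>m n) (1 \<cdot>\<^sub>m T - 1\<^sub>m n) P Q"
    by (rule sim_smult_minus_one[OF sim B'])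
  have BM: "B - 1\<^sub>m n \<in> carrier_mat n n" by (rule minus_carrier_mat) simp
  have "map_mat to_ac ((B - 1\<^sub>m n) ^\<^sub>m N) = (map_mat to_ac (B - 1\<^sub>m n)) ^\<^sub>m N"
    by (rule to_ac_hom.mat_hom_pow[OF BM])
  moreover have "map_mat to_ac (B - 1\<^sub>m n) = 1 \<cdot>\<^sub>m B' - 1\<^sub>m n"
    unfolding B'_def by (rule eq_matI) (use B in auto)
  moreover have "map_mat to_ac (0\<^sub>m n n :: 'a mat) = 0\<^sub>m n n" by (rule eq_matI) auto
  ultimately have z1: "(1 \<cdot>\<^sub>m B' - 1\<^sub>m n) ^\<^sub>m N = 0\<^sub>m n n" using uN by simp
  have "(1 \<cdot>\<^sub>m T - 1\<^sub>m n) ^\<^sub>m N = Q * (1 \<cdot>\<^sub>m B' - 1\<^sub>m n) ^\<^sub>m N * P"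
    by (rule similar_mat_wit_pow_id[OF similar_mat_wit_sym[OF simX]])
  also have "\<dots> = 0\<^sub>m n n" using z1 S by simp
  finally have z2: "(1 \<cdot>\<^sub>m T - 1\<^sub>m n) ^\<^sub>m N = 0\<^sub>m n n" .
  have U: "1 \<cdot>\<^sub>m T - 1\<^sub>m n \<in> carrier_mat n n" by (rule minus_carrier_mat) simp
  have utU: "upper_triangular (1 \<cdot>\<^sub>m T - 1\<^sub>m n)"
  proof (rule upper_triangularI)
    fix i j assume "j < i" "i < dim_row (1 \<cdot>\<^sub>m T - 1\<^sub>m n)"
    thus "(1 \<cdot>\<^sub>m T - 1\<^sub>m n) $$ (i, j) = 0" using ut S by (auto simp: upper_triangular_def)
  qed
  have diag1: "T $$ (i, i) = 1" if i: "i < n" for i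
  proof -
    have "(T $$ (i, i) - 1) ^ N = ((1 \<cdot>\<^sub>m T - 1\<^sub>m n) ^\<^sub>m N) $$ (i, i)"
      using ut_pow[OF utU U, of N] i S by simp
    also have "\<dots> = 0" using z2 i by simp
    finally show ?thesis by simp
  qed
  have tri: "tri_prop n k T" by (rule ut_tri[OF ut S(5)])
  have d1: "\<forall>I\<in>ksubsets n k. det (submatrix T I I) = 1"
  proof
    fix I assume I: "I \<in> ksubsets n k"
    have "det (submatrix T I I) = (\<Prod>i\<in>I. T $$ (i, i))" by (rule ut_diag[OF ut S(5) I])
    also have "\<dots> = (\<Prod>i\<in>I. 1)" by (rule prod.cong) (use ksubsetsD[OF I] diag1 in auto)
    finally show "det (submatrix T I I) = 1" by simp
  qed
  have NT: "\<forall>c\<in>ext_space n k. (dop k T ^^ Suc (\<Sum>{0..<n})) c = (\<lambda>I. 0)"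
    by (rule tri_nilp[OF S(5) tri d1])
  have NB': "\<forall>c\<in>ext_space n k. (dop k B' ^^ Suc (\<Sum>{0..<n})) c = (\<lambda>I. 0)"
    by (rule nilp_transfer[OF sim B' NT])
  have "\<forall>c\<in>ext_space n k. (dop k B ^^ Suc (\<Sum>{0..<n})) c = (\<lambda>I. 0)"
  proof
    fix c :: "nat set \<Rightarrow> 'a" assume c: "c \<in> ext_space n k"
    have c': "(\<lambda>I. to_ac (c I)) \<in> ext_space n k" using c unfolding ext_space_def by simp
    have "(\<lambda>I. to_ac ((dop k B ^^ Suc (\<Sum>{0..<n})) c I)) = (dop k B' ^^ Suc (\<Sum>{0..<n})) (\<lambda>I. to_ac (c I))"
      unfolding B'_def by (rule dop_map[symmetric])
    also have "\<dots> = (\<lambda>I. 0)" using NB' c' by simp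
    finally show "(dop k B ^^ Suc (\<Sum>{0..<n})) c = (\<lambda>I. 0)"
      by (intro ext) (metis to_ac_eq_0_iff)
  qed
  thus ?thesis unfolding unip_iff Bn by blast
qed

lemma backward_dir:
  fixes A :: "'a::field mat"
  assumes A: "A \<in> carrier_mat n n" and gk: "g ^ k = 1" and u: "unipotent_mat (g \<cdot>\<^sub>m A)"
  shows "ext_pow_unipotent k A"
proof -
  have d: "dim_row (g \<cdot>\<^sub>m A) = n" "dim_row A = n" using A by auto
  from u obtain N where uN: "(g \<cdot>\<^sub>m A - 1\<^sub>m n) ^\<^sub>m N = 0\<^sub>m n n"
    unfolding unipotent_mat_def d by blast
  have "ext_pow_unipotent k (g \<cdot>\<^sub>m A)" by (rule unip_ext_pow[OF _ uN], insert A, simp)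
  moreover have "dop k (g \<cdot>\<^sub>m A) = dop k A"
    unfolding dop_def using ext_pow_smult[OF A gk] by simp
  ultimately show ?thesis unfolding unip_iff d by simp
qed

hide_const (open) Divisibility.prime

theorem lemma3p7:
  fixes l n k :: nat and nv :: "'a::field_char_0 \<Rightarrow> real" and A :: "'a mat"
  assumes "prime l"
    and "is_Ql_absval l nv"
    and "A \<in> carrier_mat n n"
    and "det A \<noteq> 0"
    and "0 < k" and "k < n"
  shows "ext_pow_unipotent k A \<longleftrightarrow>
           (\<exists>\<gamma>::'a. \<gamma> ^ k = 1 \<and> nv \<gamma> \<le> 1 \<and> unipotent_mat (\<gamma> \<cdot>\<^sub>m A))"
proof
  assume "ext_pow_unipotent k A"
  thus "\<exists>\<gamma>::'a. \<gamma> ^ k = 1 \<and> nv \<gamma> \<le> 1 \<and> unipotent_mat (\<gamma> \<cdot>\<^sub>m A)"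
    by (rule forward_dir[OF assms(2) assms(3) assms(5) assms(6)])
next
  assume "\<exists>\<gamma>::'a. \<gamma> ^ k = 1 \<and> nv \<gamma> \<le> 1 \<and> unipotent_mat (\<gamma> \<cdot>\<^sub>m A)"
  then obtain g where "g ^ k = 1" "unipotent_mat (g \<cdot>\<^sub>m A)" by blast
  thus "ext_pow_unipotent k A" by (intro backward_dir[OF assms(3)])
qed

end
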